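(* Let $A\in M_2(\mathbb F)$ be normal and let $P(A)=\{B\in M_2(\mathbb F): B \text{ normal and } A+B \text{ normal}\}$. Then $\mathrm{Span}_{\mathbb R}P(A)=M_2(\mathbb F)$ if and only if $A\in\mathbb F I$.
   Context: $\mathbb F$ is $\mathbb C$ or $\mathbb R$; a matrix $N$ is normal if $N^*N=NN^*$, where $N^*$ is the conjugate transpose (transpose if real). *)

theory Defs
  imports "HOL-Analysis.Analysis"
begin

definition cadjoint :: "complex^'n^'m \<Rightarrow> complex^'m^'n" where
  "cadjoint A = (\<chi> i j. cnj (A $ j $ i))"

definition normal_c :: "complex^'n^'n \<Rightarrow> bool" where
  "normal_c N \<longleftrightarrow> cadjoint N ** N = N ** cadjoint N"

definition normal_r :: "real^'n^'n \<Rightarrow> bool" where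
  "normal_r N \<longleftrightarrow> transpose N ** N = N ** transpose N"

definition P_c :: "complex^2^2 \<Rightarrow> (complex^2^2) set" where
  "P_c A = {B. normal_c B \<and> normal_c (A + B)}"

definition P_r :: "real^2^2 \<Rightarrow> (real^2^2) set" where
  "P_r A = {B. normal_r B \<and> normal_r (A + B)}"

end

theory Submission imports Defs begin

lemma cadjoint_add: "cadjoint (A + B) = cadjoint A + cadjoint B"
  by (simp add: cadjoint_def vec_eq_iff)
lemma cadjoint_scaleR: "cadjoint (r *\<^sub>R A) = r *\<^sub>R cadjoint A"
  by (simp add: cadjoint_def vec_eq_iff)
lemma cadjoint_mat: "cadjoint (mat c :: complex^'n^'n) = mat (cnj c)"
  by (simp add: cadjoint_def vec_eq_iff mat_def)
lemma cadjoint_cadjoint: "cadjoint (cadjoint A) = A"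
  by (simp add: cadjoint_def vec_eq_iff)
lemma mrdistrib: "((B + C) ** A) = (B ** A) + (C ** A)"
  for A :: "'a::semiring_1^_^_"
  by (simp add: matrix_matrix_mult_def vec_eq_iff sum.distrib distrib_right)
lemma transp_add: "transpose (A + B) = transpose A + transpose B"
  by (simp add: transpose_def vec_eq_iff)
lemma mscaleR_l: "((r *\<^sub>R A) ** B) = r *\<^sub>R (A ** B)"
  for A :: "'a::real_algebra_1^_^_"
  by (simp add: matrix_matrix_mult_def vec_eq_iff scaleR_sum_right)
lemma mscaleR_r: "(A ** (r *\<^sub>R B)) = r *\<^sub>R (A ** B)"
  for A :: "'a::real_algebra_1^_^_"
  by (simp add: matrix_matrix_mult_def vec_eq_iff scaleR_sum_right)

lemma cadjoint_0[simp]: "cadjoint 0 = 0"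
  by (simp add: cadjoint_def vec_eq_iff)
lemma transp_0[simp]: "transpose 0 = 0"
  by (simp add: transpose_def vec_eq_iff)
lemma mat_comm_l: "mat a ** X = (\<chi> i j. a * X$i$j)" for X :: "'a::comm_semiring_1^'n^'m"
  unfolding matrix_matrix_mult_def mat_def by (simp add: vec_eq_iff if_distrib[of "\<lambda>x. x * _"] cong: if_cong)
lemma mat_comm_r: "X ** mat a = (\<chi> i j. a * X$i$j)" for X :: "'a::comm_semiring_1^'n^'m"
  unfolding matrix_matrix_mult_def mat_def by (simp add: vec_eq_iff if_distrib[of "\<lambda>x. _ * x"] mult.commute cong: if_cong)
lemma mat_comm: "X ** mat a = mat a ** X" for X :: "'a::comm_semiring_1^'n^'n"
  by (simp add: mat_comm_l mat_comm_r)
lemma mat_mat: "mat a ** mat b = (mat (a*b) :: 'a::comm_semiring_1^'n^'n)"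
  unfolding mat_comm_l by (simp add: mat_def vec_eq_iff)
lemma mneg_l: "((- A) ** B) = - (A ** B)"
  for A :: "'a::ring_1^_^_"
  by (simp add: matrix_matrix_mult_def vec_eq_iff sum_negf)
lemma mneg_r: "(A ** (- B)) = - (A ** B)"
  for A :: "'a::ring_1^_^_"
  by (simp add: matrix_matrix_mult_def vec_eq_iff sum_negf)

lemma herm_c: "cadjoint X = X \<or> cadjoint X = - X \<Longrightarrow> normal_c (mat c + X)"
proof (elim disjE)
  assume h: "cadjoint X = X"
  show ?thesis unfolding normal_c_def cadjoint_add cadjoint_mat h
    by (simp only: matrix_add_ldistrib mrdistrib mneg_l mneg_r mat_comm_l mat_comm_r)
      (simp add: vec_eq_iff mat_def algebra_simps)?
next
  assume h: "cadjoint X = - X"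
  show ?thesis unfolding normal_c_def cadjoint_add cadjoint_mat h
    by (simp only: matrix_add_ldistrib mrdistrib mneg_l mneg_r mat_comm_l mat_comm_r)
      (simp add: vec_eq_iff mat_def algebra_simps)?
qed
lemma herm_c0: "cadjoint X = X \<or> cadjoint X = - X \<Longrightarrow> normal_c X"
  unfolding normal_c_def
  by (auto simp: mneg_l mneg_r)
lemma herm_r: "transpose X = X \<or> transpose X = - X \<Longrightarrow> normal_r (mat c + X)"
proof (elim disjE)
  assume h: "transpose X = X"
  show ?thesis unfolding normal_r_def transp_add transpose_mat h
    by (simp only: matrix_add_ldistrib mrdistrib mneg_l mneg_r mat_comm_l mat_comm_r)
      (simp add: vec_eq_iff mat_def algebra_simps)?
next
  assume h: "transpose X = - X"
  show ?thesis unfolding normal_r_def transp_add transpose_mat h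
    by (simp only: matrix_add_ldistrib mrdistrib mneg_l mneg_r mat_comm_l mat_comm_r)
      (simp add: vec_eq_iff mat_def algebra_simps)?
qed
lemma herm_r0: "transpose X = X \<or> transpose X = - X \<Longrightarrow> normal_r X"
  unfolding normal_r_def
  by (elim disjE) (simp_all add: mneg_l mneg_r)


definition Lc :: "complex^'n^'n \<Rightarrow> complex^'n^'n \<Rightarrow> complex^'n^'n" where
 "Lc A B = cadjoint A ** B + cadjoint B ** A - A ** cadjoint B - B ** cadjoint A"
definition Lr :: "real^'n^'n \<Rightarrow> real^'n^'n \<Rightarrow> real^'n^'n" where
 "Lr A B = transpose A ** B + transpose B ** A - A ** transpose B - B ** transpose A"

lemma key_c: "normal_c A \<Longrightarrow> normal_c B \<Longrightarrow> normal_c (A+B) \<Longrightarrow> Lc A B = 0"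
  unfolding normal_c_def Lc_def cadjoint_add matrix_add_ldistrib mrdistrib
  by (simp add: algebra_simps)

lemma key_r: "normal_r A \<Longrightarrow> normal_r B \<Longrightarrow> normal_r (A+B) \<Longrightarrow> Lr A B = 0"
  unfolding normal_r_def Lr_def transp_add matrix_add_ldistrib mrdistrib
  by (simp add: algebra_simps)

lemma sub_c: "subspace {B. Lc A B = 0}"
  unfolding subspace_def Lc_def
  by (auto simp: cadjoint_add cadjoint_scaleR matrix_add_ldistrib mrdistrib
     mscaleR_l mscaleR_r algebra_simps simp flip: scaleR_diff_right scaleR_add_right)

lemma sub_r: "subspace {B. Lr A B = 0}"
  unfolding subspace_def Lr_def
  by (auto simp: transp_add transpose_scalar matrix_add_ldistrib mrdistrib
     mscaleR_l mscaleR_r algebra_simps simp flip: scaleR_diff_right scaleR_add_right)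

lemma fwd_c: "span (P_c (mat c)) = UNIV"
proof -
  have "C \<in> span (P_c (mat c))" for C
  proof -
    have h: "C + cadjoint C \<in> P_c (mat c)" "C - cadjoint C \<in> P_c (mat c)"
    proof -
      have "cadjoint (C + cadjoint C) = C + cadjoint C" "cadjoint (C - cadjoint C) = - (C - cadjoint C)"
        by (simp_all add: cadjoint_def vec_eq_iff)
      then show "C + cadjoint C \<in> P_c (mat c)" "C - cadjoint C \<in> P_c (mat c)"
        unfolding P_c_def mem_Collect_eq
        by (simp_all only: herm_c herm_c0 disj_not1 simp_thms)
    qed
    have "C = (1/2) *\<^sub>R (C + cadjoint C) + (1/2) *\<^sub>R (C - cadjoint C)"
    proof -
      have "(1/2) *\<^sub>R (C + cadjoint C) + (1/2) *\<^sub>R (C - cadjoint C) = ((1/2) + (1/2::real)) *\<^sub>R C"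
        by (simp only: scaleR_add_right scaleR_diff_right scaleR_add_left) simp
      then show ?thesis by simp
    qed
    also have "\<dots> \<in> span (P_c (mat c))"
      by (intro span_add span_mul span_base h)
    finally show ?thesis .
  qed
  then show ?thesis by auto
qed

lemma rev_c:
  fixes A :: "complex^2^2"
  assumes "span (P_c A) = UNIV" "normal_c A" shows "\<exists>c. A = mat c"
proof -
  have "span (P_c A) \<subseteq> {B. Lc A B = 0}"
    by (rule span_minimal) (auto simp: P_c_def key_c[OF assms(2)] sub_c)
  then have e: "Lc A C $ i $ j = 0" for C i j using assms(1) by (auto simp: subset_iff)
  have 1: "A$1$2 = 0 \<and> A$2$1 = 0"
    using e[of "\<chi> i j. if i=1 \<and> j=1 then 1 else 0" 1 2] e[of "\<chi> i j. if i=1 \<and> j=1 then \<i> else 0" 1 2]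
    unfolding Lc_def cadjoint_def by (simp add: matrix_matrix_mult_def sum_2 complex_eq_iff)
  have 2: "A$1$1 = A$2$2"
    using e[of "\<chi> i j. if i=1 \<and> j=2 then 1 else 0" 1 2] 1
    unfolding Lc_def cadjoint_def by (simp add: matrix_matrix_mult_def sum_2 complex_eq_iff)
  have "A = mat (A$1$1)"
    using 1 2 by (simp add: vec_eq_iff mat_def forall_2)
  then show ?thesis by blast
qed

lemma rev_r:
  fixes A :: "real^2^2"
  assumes "span (P_r A) = UNIV" "normal_r A" shows "\<exists>c. A = mat c"
proof -
  have "span (P_r A) \<subseteq> {B. Lr A B = 0}"
    by (rule span_minimal) (auto simp: P_r_def key_r[OF assms(2)] sub_r)
  then have e: "Lr A C $ i $ j = 0" for C i j using assms(1) by (auto simp: subset_iff)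
  have 1: "A$1$2 = A$2$1"
    using e[of "\<chi> i j. if i=1 \<and> j=1 then 1 else 0" 1 2]
    unfolding Lr_def transpose_def by (simp add: matrix_matrix_mult_def sum_2)
  have 2: "A$1$2 = 0 \<and> A$1$1 = A$2$2"
    using e[of "\<chi> i j. if i=1 \<and> j=2 then 1 else 0" 1 1] e[of "\<chi> i j. if i=1 \<and> j=2 then 1 else 0" 1 2] 1
    unfolding Lr_def transpose_def by (simp add: matrix_matrix_mult_def sum_2)
  have "A = mat (A$1$1)"
    using 1 2 by (simp add: vec_eq_iff mat_def forall_2)
  then show ?thesis by blast
qed

lemma fwd_r: "span (P_r (mat c)) = UNIV"
proof -
  have "C \<in> span (P_r (mat c))" for C
  proof -
    have h: "C + transpose C \<in> P_r (mat c)" "C - transpose C \<in> P_r (mat c)"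
    proof -
      have "transpose (C + transpose C) = C + transpose C" "transpose (C - transpose C) = - (C - transpose C)"
        by (simp_all add: transpose_def vec_eq_iff)
      then show "C + transpose C \<in> P_r (mat c)" "C - transpose C \<in> P_r (mat c)"
        unfolding P_r_def mem_Collect_eq
        by (simp_all only: herm_r herm_r0 disj_not1 simp_thms)
    qed
    have "C = (1/2) *\<^sub>R (C + transpose C) + (1/2) *\<^sub>R (C - transpose C)"
    proof -
      have "(1/2) *\<^sub>R (C + transpose C) + (1/2) *\<^sub>R (C - transpose C) = ((1/2) + (1/2::real)) *\<^sub>R C"
        by (simp only: scaleR_add_right scaleR_diff_right scaleR_add_left) simp
      then show ?thesis by simp
    qed
    also have "\<dots> \<in> span (P_r (mat c))"
      by (intro span_add span_mul span_base h)
    finally show ?thesis .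
  qed
  then show ?thesis by auto
qed

theorem mainTheorem12:
  shows "(\<forall>A :: complex^2^2. normal_c A \<longrightarrow>
            (span (P_c A) = UNIV \<longleftrightarrow> (\<exists>c. A = mat c)))
       \<and> (\<forall>A :: real^2^2. normal_r A \<longrightarrow>
            (span (P_r A) = UNIV \<longleftrightarrow> (\<exists>c. A = mat c)))"
  using rev_c rev_r fwd_c fwd_r by blast

end
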